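(* Let $\omega$ be a primitive third root of unity, $S=\mathbb{C}\langle x,y,z\rangle/(x^2,y^2,z^2)$, and for $[A:B]\in\mathbb{P}^1$ let $T_{[A:B]}$ be the quotient of $S$ by the two-sided ideal generated by $$A(zxy+\omega xyz+\omega^2 yzx)+B(yxz+\omega zyx+\omega^2 xzy),\qquad A(zxy+\omega^2 xyz+\omega yzx)+B(yxz+\omega^2 zyx+\omega xzy).$$ Let the Heisenberg group $H_3$ act on $T_{[A:B]}$ by the graded automorphisms determined by $e_1\cdot x=z,\ e_1\cdot y=x,\ e_1\cdot z=y$ and $e_2\cdot x=x,\ e_2\cdot y=\omega y,\ e_2\cdot z=\omega^2 z$. Then for every $[A:B]\in\mathbb{P}^1$ there exists a nonzero central element of degree 3 in $T_{[A:B]}$ which is fixed by $H_3$.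
   Context: $H_3=\langle e_1,e_2\mid [e_1,e_2]\text{ central},\ e_1^3=e_2^3=1\rangle$ is the Heisenberg group of order 27. The given action preserves the defining ideal, so it induces an action on $T_{[A:B]}$. In the paper the parametrization is written via $t=B/A\in\mathbb{P}^1$ (points of the diagonal $\Delta\subset\mathbb{P}^1\times\mathbb{P}^1$). *)

theory Defs
  imports Complex_Main
begin

text \<open>The free associative algebra C<x,y,z>: elements are finitely supported
  functions from words over the three generators to complex coefficients.\<close>

datatype gen = X | Y | Z

type_synonym ncp = "gen list \<Rightarrow> complex"

definition nc_fin :: "ncp \<Rightarrow> bool" where
  "nc_fin p \<longleftrightarrow> finite {w. p w \<noteq> 0}"

definition nc_add :: "ncp \<Rightarrow> ncp \<Rightarrow> ncp" where
  "nc_add p q = (\<lambda>w. p w + q w)"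

definition nc_diff :: "ncp \<Rightarrow> ncp \<Rightarrow> ncp" where
  "nc_diff p q = (\<lambda>w. p w - q w)"

definition nc_scale :: "complex \<Rightarrow> ncp \<Rightarrow> ncp" where
  "nc_scale c p = (\<lambda>w. c * p w)"

definition nc_zero :: ncp where
  "nc_zero = (\<lambda>w. 0)"

definition nc_one :: ncp where
  "nc_one = (\<lambda>w. if w = [] then 1 else 0)"

definition nc_mul :: "ncp \<Rightarrow> ncp \<Rightarrow> ncp" where
  "nc_mul p q = (\<lambda>w. \<Sum>i\<le>length w. p (take i w) * q (drop i w))"

definition nc_var :: "gen \<Rightarrow> ncp" where
  "nc_var v = (\<lambda>w. if w = [v] then 1 else 0)"

definition nc_prodlist :: "ncp list \<Rightarrow> ncp" where
  "nc_prodlist ps = foldr nc_mul ps nc_one"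

definition nc_lin :: "(complex \<times> gen list) list \<Rightarrow> ncp" where
  "nc_lin cs = (\<lambda>w. \<Sum>(c,u)\<leftarrow>cs. if u = w then c else 0)"

definition nc_subst :: "(gen \<Rightarrow> ncp) \<Rightarrow> ncp \<Rightarrow> ncp" where
  "nc_subst f p = (\<lambda>u. \<Sum>w\<in>{w. p w \<noteq> 0}. p w * nc_prodlist (map f w) u)"

inductive_set nc_ideal :: "ncp set \<Rightarrow> ncp set" for G where
  zero: "nc_zero \<in> nc_ideal G"
| step: "h \<in> nc_ideal G \<Longrightarrow> g \<in> G \<Longrightarrow> nc_fin a \<Longrightarrow> nc_fin b
         \<Longrightarrow> nc_add h (nc_mul (nc_mul a g) b) \<in> nc_ideal G"

definition rel1 :: "complex \<Rightarrow> complex \<Rightarrow> complex \<Rightarrow> ncp" where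
  "rel1 \<omega> A B = nc_lin
     [(A, [Z,X,Y]), (A*\<omega>, [X,Y,Z]), (A*\<omega>^2, [Y,Z,X]),
      (B, [Y,X,Z]), (B*\<omega>, [Z,Y,X]), (B*\<omega>^2, [X,Z,Y])]"

definition rel2 :: "complex \<Rightarrow> complex \<Rightarrow> complex \<Rightarrow> ncp" where
  "rel2 \<omega> A B = nc_lin
     [(A, [Z,X,Y]), (A*\<omega>^2, [X,Y,Z]), (A*\<omega>, [Y,Z,X]),
      (B, [Y,X,Z]), (B*\<omega>^2, [Z,Y,X]), (B*\<omega>, [X,Z,Y])]"

definition T_ideal :: "complex \<Rightarrow> complex \<Rightarrow> complex \<Rightarrow> ncp set" where
  "T_ideal \<omega> A B = nc_ideal
     {nc_lin [(1,[X,X])], nc_lin [(1,[Y,Y])], nc_lin [(1,[Z,Z])],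
      rel1 \<omega> A B, rel2 \<omega> A B}"

definition e1_act :: "gen \<Rightarrow> ncp" where
  "e1_act v = (case v of X \<Rightarrow> nc_var Z | Y \<Rightarrow> nc_var X | Z \<Rightarrow> nc_var Y)"

definition e2_act :: "complex \<Rightarrow> gen \<Rightarrow> ncp" where
  "e2_act \<omega> v = (case v of X \<Rightarrow> nc_var X | Y \<Rightarrow> nc_scale \<omega> (nc_var Y)
                    | Z \<Rightarrow> nc_scale (\<omega>^2) (nc_var Z))"

definition homog :: "nat \<Rightarrow> ncp \<Rightarrow> bool" where
  "homog d p \<longleftrightarrow> (\<forall>w. length w \<noteq> d \<longrightarrow> p w = 0)"

end

theory Submission
  imports Defs
begin


lemma nc_lin_Nil: "nc_lin [] = nc_zero"
  by (simp add: nc_lin_def nc_zero_def)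

lemma nc_lin_Cons: "nc_lin (x#xs) = nc_add (nc_lin [x]) (nc_lin xs)"
  by (auto simp: nc_lin_def nc_add_def split: prod.splits)

lemma nc_lin_append: "nc_lin (xs@ys) = nc_add (nc_lin xs) (nc_lin ys)"
  by (auto simp: nc_lin_def nc_add_def)

lemma nc_add_zero_left[simp]: "nc_add nc_zero p = p" by (simp add: nc_add_def nc_zero_def)
lemma nc_add_zero_right[simp]: "nc_add p nc_zero = p" by (simp add: nc_add_def nc_zero_def)

lemma nc_mul_add_left: "nc_mul (nc_add p q) r = nc_add (nc_mul p r) (nc_mul q r)"
  by (simp add: nc_mul_def nc_add_def algebra_simps sum.distrib)
lemma nc_mul_add_right: "nc_mul r (nc_add p q) = nc_add (nc_mul r p) (nc_mul r q)"
  by (simp add: nc_mul_def nc_add_def algebra_simps sum.distrib)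
lemma nc_mul_diff_left: "nc_mul (nc_diff p q) r = nc_diff (nc_mul p r) (nc_mul q r)"
  by (simp add: nc_mul_def nc_diff_def algebra_simps sum_subtractf)
lemma nc_mul_diff_right: "nc_mul r (nc_diff p q) = nc_diff (nc_mul r p) (nc_mul r q)"
  by (simp add: nc_mul_def nc_diff_def algebra_simps sum_subtractf)
lemma nc_mul_scale_left: "nc_mul (nc_scale c p) r = nc_scale c (nc_mul p r)"
  by (simp add: nc_mul_def nc_scale_def algebra_simps sum_distrib_left)
lemma nc_mul_scale_right: "nc_mul r (nc_scale c p) = nc_scale c (nc_mul r p)"
  by (simp add: nc_mul_def nc_scale_def algebra_simps sum_distrib_left)
lemma nc_mul_zero_left[simp]: "nc_mul nc_zero p = nc_zero"
  by (simp add: nc_mul_def nc_zero_def)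
lemma nc_mul_zero_right[simp]: "nc_mul p nc_zero = nc_zero"
  by (simp add: nc_mul_def nc_zero_def)

lemma split_count:
  fixes u v w :: "gen list"
  shows "(\<Sum>i\<le>length w. (if take i w = u then c else 0) * (if drop i w = v then d else (0::complex)))
     = (if u @ v = w then c * d else 0)"
proof (cases "u @ v = w")
  case True
  have "(\<Sum>i\<le>length w. (if take i w = u then c else 0) * (if drop i w = v then d else (0::complex)))
      = (\<Sum>i\<in>{length u}. (if take i w = u then c else 0) * (if drop i w = v then d else (0::complex)))"
  proof (rule sum.mono_neutral_right)
    show "finite {..length w}" by simp
    show "{length u} \<subseteq> {..length w}" using True by auto
    show "\<forall>i\<in>{..length w} - {length u}. (if take i w = u then c else 0) * (if drop i w = v then d else 0) = 0"
    proof
      fix i assume "i \<in> {..length w} - {length u}"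
      then have "i \<le> length w" "i \<noteq> length u" by auto
      then have "take i w \<noteq> u" by auto
      then show "(if take i w = u then c else 0) * (if drop i w = v then d else 0) = 0" by simp
    qed
  qed
  also have "\<dots> = c * d" using True by auto
  finally show ?thesis using True by simp
next
  case False
  have "\<forall>i\<in>{..length w}. (if take i w = u then c else 0) * (if drop i w = v then d else (0::complex)) = 0"
  proof
    fix i assume "i \<in> {..length w}"
    show "(if take i w = u then c else 0) * (if drop i w = v then d else (0::complex)) = 0"
      using False append_take_drop_id[of i w] by auto
  qed
  then have "(\<Sum>i\<le>length w. (if take i w = u then c else 0) * (if drop i w = v then d else (0::complex))) = 0"
    by (rule sum.neutral)
  then show ?thesis using False by simp
qed

lemma nc_lin_single: "nc_lin [(c,u)] = (\<lambda>w. if w = u then c else 0)"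
  by (auto simp: nc_lin_def)

lemma nc_lin_single_mul: "nc_mul (nc_lin [(c,u)]) (nc_lin [(d,v)]) = nc_lin [(c*d,u@v)]"
  unfolding nc_lin_single nc_mul_def
  apply (rule ext)
  apply (subst split_count)
  apply auto
  done

definition lmul :: "(complex \<times> gen list) list \<Rightarrow> (complex \<times> gen list) list \<Rightarrow> (complex \<times> gen list) list" where
  "lmul xs ys = concat (map (\<lambda>(c,u). map (\<lambda>(d,v). (c*d, u@v)) ys) xs)"

lemma nc_lin_mul_single_left: "nc_mul (nc_lin [(c,u)]) (nc_lin ys) = nc_lin (map (\<lambda>(d,v). (c*d, u@v)) ys)"
proof (induction ys)
  case Nil
  then show ?case by (simp add: nc_lin_Nil)
next
  case (Cons y ys)
  obtain d v where y: "y = (d,v)" by (cases y)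
  show ?case
    apply (subst nc_lin_Cons[of y ys])
    apply (subst nc_mul_add_right)
    apply (simp add: Cons y nc_lin_single_mul)
    apply (subst (2) nc_lin_Cons)
    apply simp
    done
qed

lemma nc_lin_mul: "nc_mul (nc_lin xs) (nc_lin ys) = nc_lin (lmul xs ys)"
proof (induction xs)
  case Nil
  then show ?case by (simp add: nc_lin_Nil lmul_def)
next
  case (Cons x xs)
  obtain c u where x: "x = (c,u)" by (cases x)
  show ?case
    apply (subst nc_lin_Cons)
    apply (subst nc_mul_add_left)
    apply (simp add: Cons x nc_lin_mul_single_left lmul_def nc_lin_append)
    done
qed

lemma nc_lin_add: "nc_add (nc_lin xs) (nc_lin ys) = nc_lin (xs @ ys)"
  by (simp add: nc_lin_append)

definition lscale :: "complex \<Rightarrow> (complex \<times> gen list) list \<Rightarrow> (complex \<times> gen list) list" where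
  "lscale c xs = map (\<lambda>(d,v). (c*d, v)) xs"

lemma lscale_pt: "nc_lin (lscale c xs) w = c * nc_lin xs w"
  unfolding nc_lin_def lscale_def
  by (induction xs) (auto simp: algebra_simps)

lemma nc_lin_scale: "nc_scale c (nc_lin xs) = nc_lin (lscale c xs)"
  by (rule ext) (simp add: nc_scale_def lscale_pt)

lemma nc_lin_diff: "nc_diff (nc_lin xs) (nc_lin ys) = nc_lin (xs @ lscale (-1) ys)"
proof -
  have "nc_lin (lscale (-1) ys) = (\<lambda>w. - nc_lin ys w)"
    by (rule ext) (simp add: lscale_pt)
  then show ?thesis by (simp add: nc_lin_append nc_add_def nc_diff_def)
qed

lemma nc_var_lin: "nc_var v = nc_lin [(1,[v])]"
  by (auto simp: nc_var_def nc_lin_def)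

lemma nc_one_lin: "nc_one = nc_lin [(1,[])]"
  by (auto simp: nc_one_def nc_lin_def)

lemma nc_lin_notin: "u \<notin> set (map snd xs) \<Longrightarrow> nc_lin xs u = 0"
  unfolding nc_lin_def by (induction xs) auto

lemma nc_lin_eqI:
  assumes "\<And>u. u \<in> set (map snd xs @ map snd ys) \<Longrightarrow> nc_lin xs u = nc_lin ys u"
  shows "nc_lin xs = nc_lin ys"
proof
  fix u show "nc_lin xs u = nc_lin ys u"
    using assms nc_lin_notin[of u xs] nc_lin_notin[of u ys] by (cases "u \<in> set (map snd xs @ map snd ys)") auto
qed

lemma nc_fin_lin: "nc_fin (nc_lin xs)"
proof -
  have "{w. nc_lin xs w \<noteq> 0} \<subseteq> set (map snd xs)" using nc_lin_notin by blast
  then show ?thesis unfolding nc_fin_def by (rule finite_subset) simp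
qed

lemma nc_fin_mul:
  assumes "nc_fin p" "nc_fin q" shows "nc_fin (nc_mul p q)"
proof -
  have "{w. nc_mul p q w \<noteq> 0} \<subseteq> (\<lambda>(u,v). u@v) ` ({w. p w \<noteq> 0} \<times> {w. q w \<noteq> 0})"
  proof
    fix w assume "w \<in> {w. nc_mul p q w \<noteq> 0}"
    then obtain i where "p (take i w) * q (drop i w) \<noteq> 0"
      unfolding nc_mul_def by (auto elim: sum.not_neutral_contains_not_neutral)
    then show "w \<in> (\<lambda>(u,v). u@v) ` ({w. p w \<noteq> 0} \<times> {w. q w \<noteq> 0})"
      by (intro image_eqI[of _ _ "(take i w, drop i w)"]) auto
  qed
  moreover have "finite ((\<lambda>(u,v). u@v) ` ({w. p w \<noteq> 0} \<times> {w. q w \<noteq> 0}))"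
    using assms unfolding nc_fin_def by auto
  ultimately show ?thesis unfolding nc_fin_def by (rule finite_subset)
qed

lemma nc_fin_add: "nc_fin p \<Longrightarrow> nc_fin q \<Longrightarrow> nc_fin (nc_add p q)"
  unfolding nc_fin_def nc_add_def
  by (rule finite_subset[of _ "{w. p w \<noteq> 0} \<union> {w. q w \<noteq> 0}"]) auto

lemma nc_mul_assoc: "nc_mul (nc_mul p q) r = nc_mul p (nc_mul q r)"
proof
  fix w :: "gen list"
  define n where "n = length w"
  define F where "F i m = p (take i w) * q (take m (drop i w)) * r (drop m (drop i w))" for i m
  have L: "nc_mul (nc_mul p q) r w = (\<Sum>j\<le>n. \<Sum>i\<le>j. F i (j - i))"
    unfolding nc_mul_def n_def[symmetric]
  proof (rule sum.cong[OF refl])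
    fix j assume j: "j \<in> {..n}"
    then have jn: "j \<le> n" by simp
    have "length (take j w) = j" using jn n_def by simp
    then have "(\<Sum>i\<le>length (take j w). p (take i (take j w)) * q (drop i (take j w))) * r (drop j w)
       = (\<Sum>i\<le>j. p (take i (take j w)) * q (drop i (take j w)) * r (drop j w))"
      by (simp add: sum_distrib_right)
    also have "\<dots> = (\<Sum>i\<le>j. F i (j - i))"
    proof (rule sum.cong[OF refl])
      fix i assume "i \<in> {..j}"
      then have ij: "i \<le> j" by simp
      have "drop j w = drop (j - i) (drop i w)" using ij by simp
      moreover have "take i (take j w) = take i w" using ij by (simp add: min_def)
      moreover have "drop i (take j w) = take (j - i) (drop i w)" by (simp add: drop_take)
      ultimately show "p (take i (take j w)) * q (drop i (take j w)) * r (drop j w) = F i (j - i)"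
        by (simp add: F_def)
    qed
    finally show "(\<Sum>i\<le>length (take j w). p (take i (take j w)) * q (drop i (take j w))) * r (drop j w)
       = (\<Sum>i\<le>j. F i (j - i))" .
  qed
  have R: "nc_mul p (nc_mul q r) w = (\<Sum>i\<le>n. \<Sum>m\<le>n - i. F i m)"
    unfolding nc_mul_def n_def[symmetric]
    by (simp add: F_def sum_distrib_left mult.assoc n_def)
  have "(\<Sum>j\<le>n. \<Sum>i\<le>j. F i (j - i)) = (\<Sum>(i,m)\<in>{(i,m). i+m \<le> n}. F i m)"
    by (rule sum.triangle_reindex_eq[symmetric])
  also have "{(i,m). i+m \<le> n} = Sigma {..n} (\<lambda>i. {..n-i})" by auto
  also have "(\<Sum>(i,m)\<in>Sigma {..n} (\<lambda>i. {..n-i}). F i m) = (\<Sum>i\<le>n. \<Sum>m\<le>n - i. F i m)"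
    by (rule sum.Sigma[symmetric]) auto
  finally show "nc_mul (nc_mul p q) r w = nc_mul p (nc_mul q r) w" using L R by simp
qed

lemma nc_fin_scale: "nc_fin a \<Longrightarrow> nc_fin (nc_scale c a)"
  unfolding nc_fin_def nc_scale_def by (rule finite_subset[rotated]) auto

lemma ideal_gen: "g \<in> G \<Longrightarrow> nc_fin a \<Longrightarrow> nc_fin b \<Longrightarrow> nc_mul (nc_mul a g) b \<in> nc_ideal G"
  using nc_ideal.step[OF nc_ideal.zero] by fastforce

lemma nc_add_assoc: "nc_add (nc_add a b) c = nc_add a (nc_add b c)"
  by (simp add: nc_add_def add.assoc)

lemma ideal_add: "h2 \<in> nc_ideal G \<Longrightarrow> h1 \<in> nc_ideal G \<Longrightarrow> nc_add h1 h2 \<in> nc_ideal G"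
proof (induction h2 rule: nc_ideal.induct)
  case zero then show ?case by simp
next
  case (step h g a b)
  then show ?case using nc_ideal.step[of "nc_add h1 h" G g a b] by (simp add: nc_add_assoc)
qed

lemma ideal_scale: "h \<in> nc_ideal G \<Longrightarrow> nc_scale c h \<in> nc_ideal G"
proof (induction h rule: nc_ideal.induct)
  case zero
  have "nc_scale c nc_zero = nc_zero" by (simp add: nc_scale_def nc_zero_def)
  then show ?case by (simp add: nc_ideal.zero)
next
  case (step h g a b)
  have "nc_scale c (nc_add h (nc_mul (nc_mul a g) b)) = nc_add (nc_scale c h) (nc_mul (nc_mul (nc_scale c a) g) b)"
    by (simp add: nc_mul_scale_left) (simp add: nc_scale_def nc_add_def algebra_simps)
  then show ?case using step nc_ideal.step[of "nc_scale c h" G g "nc_scale c a" b] nc_fin_scale by simp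
qed

lemma ideal_mul_left: "h \<in> nc_ideal G \<Longrightarrow> nc_fin c \<Longrightarrow> nc_mul c h \<in> nc_ideal G"
proof (induction h rule: nc_ideal.induct)
  case zero then show ?case by (simp add: nc_ideal.zero)
next
  case (step h g a b)
  have "nc_mul c (nc_add h (nc_mul (nc_mul a g) b)) = nc_add (nc_mul c h) (nc_mul (nc_mul (nc_mul c a) g) b)"
    by (simp add: nc_mul_add_right nc_mul_assoc)
  then show ?case using step nc_ideal.step[of "nc_mul c h" G g "nc_mul c a" b] nc_fin_mul by simp
qed

lemma ideal_mul_right: "h \<in> nc_ideal G \<Longrightarrow> nc_fin c \<Longrightarrow> nc_mul h c \<in> nc_ideal G"
proof (induction h rule: nc_ideal.induct)
  case zero then show ?case by (simp add: nc_ideal.zero)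
next
  case (step h g a b)
  have "nc_mul (nc_add h (nc_mul (nc_mul a g) b)) c = nc_add (nc_mul h c) (nc_mul (nc_mul a g) (nc_mul b c))"
    by (simp add: nc_mul_add_left nc_mul_assoc)
  then show ?case using step nc_ideal.step[of "nc_mul h c" G g a "nc_mul b c"] nc_fin_mul by simp
qed

definition comm :: "ncp \<Rightarrow> ncp \<Rightarrow> ncp" where
  "comm p q = nc_diff (nc_mul p q) (nc_mul q p)"

lemma comm_add: "comm p (nc_add q1 q2) = nc_add (comm p q1) (comm p q2)"
  unfolding comm_def nc_mul_add_left nc_mul_add_right
  by (simp add: nc_add_def nc_diff_def algebra_simps)

lemma comm_scale: "comm p (nc_scale c q) = nc_scale c (comm p q)"
  unfolding comm_def nc_mul_scale_left nc_mul_scale_right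
  by (simp add: nc_scale_def nc_diff_def algebra_simps)

lemma comm_mul: "comm p (nc_mul v m) = nc_add (nc_mul (comm p v) m) (nc_mul v (comm p m))"
  unfolding comm_def nc_mul_diff_left nc_mul_diff_right nc_mul_assoc
  by (simp add: nc_add_def nc_diff_def)

lemma nc_mul_one_right: "nc_mul p nc_one = p"
proof
  fix w
  have "nc_mul p nc_one w = (\<Sum>i\<in>{length w}. p (take i w) * nc_one (drop i w))"
    unfolding nc_mul_def by (rule sum.mono_neutral_right) (auto simp: nc_one_def)
  then show "nc_mul p nc_one w = p w" by (simp add: nc_one_def)
qed

lemma nc_mul_one_left: "nc_mul nc_one p = p"
proof
  fix w
  have "nc_mul nc_one p w = (\<Sum>i\<in>{0}. nc_one (take i w) * p (drop i w))"
    unfolding nc_mul_def by (rule sum.mono_neutral_right) (auto simp: nc_one_def)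
  then show "nc_mul nc_one p w = p w" by (simp add: nc_one_def)
qed

lemma central:
  assumes hv: "\<And>v. comm p (nc_var v) \<in> nc_ideal G"
    and q: "nc_fin q"
  shows "comm p q \<in> nc_ideal G"
proof -
  have mono: "comm p (nc_lin [(1,w)]) \<in> nc_ideal G" for w
  proof (induction w)
    case Nil
    have "comm p (nc_lin [(1,[])]) = nc_zero"
      unfolding nc_one_lin[symmetric] comm_def nc_mul_one_right nc_mul_one_left
      by (simp add: nc_diff_def nc_zero_def)
    then show ?case by (simp add: nc_ideal.zero)
  next
    case (Cons v w)
    have "nc_lin [(1, v#w)] = nc_mul (nc_var v) (nc_lin [(1,w)])"
      by (simp add: nc_var_lin nc_lin_single_mul)
    then show ?case
      using Cons hv[of v] by (simp add: comm_mul ideal_add ideal_mul_left ideal_mul_right nc_fin_lin nc_var_lin)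
  qed
  have "\<forall>q. {w. q w \<noteq> 0} \<subseteq> S \<longrightarrow> comm p q \<in> nc_ideal G" if "finite S" for S
    using that
  proof (induction S rule: finite_induct)
    case empty
    {
      fix q :: ncp assume "{w. q w \<noteq> 0} \<subseteq> {}"
      then have "q = nc_zero" by (auto simp: nc_zero_def)
      then have "comm p q = nc_zero" by (simp add: comm_def nc_diff_def) (simp add: nc_zero_def)
    }
    then show ?case by (auto intro: nc_ideal.zero)
  next
    case (insert x S)
    show ?case
    proof (intro allI impI)
      fix q :: ncp assume sq: "{w. q w \<noteq> 0} \<subseteq> insert x S"
      have dec: "q = nc_add (q(x:=0)) (nc_scale (q x) (nc_lin [(1,x)]))"
        by (auto simp: nc_add_def nc_scale_def nc_lin_def)
      have "{w. (q(x:=0)) w \<noteq> 0} \<subseteq> S" using sq by auto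
      then have "comm p (q(x:=0)) \<in> nc_ideal G" using insert by blast
      moreover have "comm p (nc_scale (q x) (nc_lin [(1,x)])) \<in> nc_ideal G"
        by (simp add: comm_scale ideal_scale mono)
      ultimately show "comm p q \<in> nc_ideal G"
        by (subst dec) (simp add: comm_add ideal_add)
    qed
  qed
  then show ?thesis using q unfolding nc_fin_def by blast
qed

definition pc :: "complex \<Rightarrow> complex \<Rightarrow> ncp" where
  "pc A B = nc_lin [(A,[X,Y,Z]),(A,[Z,X,Y]),(A,[Y,Z,X]),(B,[X,Z,Y]),(B,[Z,Y,X]),(B,[Y,X,Z])]"



lemma comm_X:
  fixes w A B :: complex
  assumes hw: "w^3 = 1"
  shows "comm (pc A B) (nc_var X) = nc_add (nc_mul (nc_mul (nc_lin [(1,[])]) (rel2 w A B)) (nc_lin [(1,[X])]))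
   (nc_add (nc_mul (nc_mul (nc_lin [(- (1),[X])]) (rel1 w A B)) (nc_lin [(1,[])]))
   (nc_add (nc_mul (nc_mul (nc_lin [((A - A*w),[Y,Z])]) (nc_lin [(1,[X,X])])) (nc_lin [(1,[])]))
   (nc_add (nc_mul (nc_mul (nc_lin [((B - B*w^2),[Z,Y])]) (nc_lin [(1,[X,X])])) (nc_lin [(1,[])]))
   (nc_add (nc_mul (nc_mul (nc_lin [((- A + A*w),[])]) (nc_lin [(1,[X,X])])) (nc_lin [(1,[Y,Z])]))
   (nc_mul (nc_mul (nc_lin [((- B + B*w^2),[])]) (nc_lin [(1,[X,X])])) (nc_lin [(1,[Z,Y])]))))))"
proof -
  have "w^4 = w^3 * w" by (simp add: eval_nat_numeral)
  then have w4: "w^4 = w" using hw by simp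
  have w3: "w * w^2 = 1" "w^2 * w = 1" using hw by (simp_all add: power2_eq_square power3_eq_cube mult.assoc)
  have ww: "w * w = w^2" by (simp add: power2_eq_square)
  show ?thesis
  unfolding comm_def pc_def nc_var_lin rel1_def rel2_def
  apply (simp only: nc_lin_mul nc_lin_add nc_lin_diff)
  apply (rule nc_lin_eqI)
  apply (simp add: lmul_def lscale_def)
  apply (elim disjE; simp add: nc_lin_def w4 w3 ww)
  done
qed

lemma comm_X_in:
  fixes w A B :: complex
  assumes hw: "w^3 = 1"
  shows "comm (pc A B) (nc_var X) \<in> T_ideal w A B"
  unfolding comm_X[OF hw] T_ideal_def
  by (intro ideal_add ideal_gen) (simp_all add: nc_fin_lin)

lemma comm_Y:
  fixes w A B :: complex
  assumes hw: "w^3 = 1"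
  shows "comm (pc A B) (nc_var Y) = nc_add (nc_mul (nc_mul (nc_lin [(w,[])]) (rel2 w A B)) (nc_lin [(1,[Y])]))
   (nc_add (nc_mul (nc_mul (nc_lin [(- (w^2),[Y])]) (rel1 w A B)) (nc_lin [(1,[])]))
   (nc_add (nc_mul (nc_mul (nc_lin [((A - A*w),[Z,X])]) (nc_lin [(1,[Y,Y])])) (nc_lin [(1,[])]))
   (nc_add (nc_mul (nc_mul (nc_lin [((B - B*w^2),[X,Z])]) (nc_lin [(1,[Y,Y])])) (nc_lin [(1,[])]))
   (nc_add (nc_mul (nc_mul (nc_lin [((- A + A*w^4),[])]) (nc_lin [(1,[Y,Y])])) (nc_lin [(1,[Z,X])]))
   (nc_mul (nc_mul (nc_lin [((- B + B*w^2),[])]) (nc_lin [(1,[Y,Y])])) (nc_lin [(1,[X,Z])]))))))"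
proof -
  have "w^4 = w^3 * w" by (simp add: eval_nat_numeral)
  then have w4: "w^4 = w" using hw by simp
  have w3: "w * w^2 = 1" "w^2 * w = 1" using hw by (simp_all add: power2_eq_square power3_eq_cube mult.assoc)
  have ww: "w * w = w^2" by (simp add: power2_eq_square)
  show ?thesis
  unfolding comm_def pc_def nc_var_lin rel1_def rel2_def
  apply (simp only: nc_lin_mul nc_lin_add nc_lin_diff)
  apply (rule nc_lin_eqI)
  apply (simp add: lmul_def lscale_def)
  apply (elim disjE; simp add: nc_lin_def w4 w3 ww)
  done
qed

lemma comm_Y_in:
  fixes w A B :: complex
  assumes hw: "w^3 = 1"
  shows "comm (pc A B) (nc_var Y) \<in> T_ideal w A B"
  unfolding comm_Y[OF hw] T_ideal_def
  by (intro ideal_add ideal_gen) (simp_all add: nc_fin_lin)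

lemma comm_Z:
  fixes w A B :: complex
  assumes hw: "w^3 = 1"
  shows "comm (pc A B) (nc_var Z) = nc_add (nc_mul (nc_mul (nc_lin [(w^2,[])]) (rel2 w A B)) (nc_lin [(1,[Z])]))
   (nc_add (nc_mul (nc_mul (nc_lin [(- (w),[Z])]) (rel1 w A B)) (nc_lin [(1,[])]))
   (nc_add (nc_mul (nc_mul (nc_lin [((A - A*w^4),[X,Y])]) (nc_lin [(1,[Z,Z])])) (nc_lin [(1,[])]))
   (nc_add (nc_mul (nc_mul (nc_lin [((B - B*w^2),[Y,X])]) (nc_lin [(1,[Z,Z])])) (nc_lin [(1,[])]))
   (nc_add (nc_mul (nc_mul (nc_lin [((- A + A*w),[])]) (nc_lin [(1,[Z,Z])])) (nc_lin [(1,[X,Y])]))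
   (nc_mul (nc_mul (nc_lin [((- B + B*w^2),[])]) (nc_lin [(1,[Z,Z])])) (nc_lin [(1,[Y,X])]))))))"
proof -
  have "w^4 = w^3 * w" by (simp add: eval_nat_numeral)
  then have w4: "w^4 = w" using hw by simp
  have w3: "w * w^2 = 1" "w^2 * w = 1" using hw by (simp_all add: power2_eq_square power3_eq_cube mult.assoc)
  have ww: "w * w = w^2" by (simp add: power2_eq_square)
  show ?thesis
  unfolding comm_def pc_def nc_var_lin rel1_def rel2_def
  apply (simp only: nc_lin_mul nc_lin_add nc_lin_diff)
  apply (rule nc_lin_eqI)
  apply (simp add: lmul_def lscale_def)
  apply (elim disjE; simp add: nc_lin_def w4 w3 ww)
  done
qed

lemma comm_Z_in:
  fixes w A B :: complex
  assumes hw: "w^3 = 1"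
  shows "comm (pc A B) (nc_var Z) \<in> T_ideal w A B"
  unfolding comm_Z[OF hw] T_ideal_def
  by (intro ideal_add ideal_gen) (simp_all add: nc_fin_lin)

definition phi :: "ncp \<Rightarrow> complex" where
  "phi f = f [X,Y,Z] + f [Z,X,Y] + f [Y,Z,X]"
definition psi :: "ncp \<Rightarrow> complex" where
  "psi f = f [X,Z,Y] + f [Z,Y,X] + f [Y,X,Z]"

lemma phi_gen:
  fixes w A B :: complex
  assumes hw: "1 + w + w^2 = 0" and g: "g \<in> {nc_lin [(1,[X,X])], nc_lin [(1,[Y,Y])], nc_lin [(1,[Z,Z])],
      rel1 w A B, rel2 w A B}"
  shows "phi (nc_mul (nc_mul a g) b) = 0 \<and> psi (nc_mul (nc_mul a g) b) = 0"
proof -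
  have hw2: "w * w = - 1 - w" using hw by (simp add: power2_eq_square eq_neg_iff_add_eq_0 algebra_simps)
  show ?thesis
  using g
  apply (simp add: phi_def psi_def)
  apply (elim disjE; simp add: nc_mul_def rel1_def rel2_def nc_lin_def eval_nat_numeral atMost_Suc)
  apply (simp_all add: hw2 algebra_simps)
  done
qed

lemma phi_ideal:
  fixes w A B :: complex
  assumes hw: "1 + w + w^2 = 0" and h: "h \<in> T_ideal w A B"
  shows "phi h = 0 \<and> psi h = 0"
  using h unfolding T_ideal_def
proof (induction h rule: nc_ideal.induct)
  case zero then show ?case by (simp add: phi_def psi_def nc_zero_def)
next
  case (step h g a b)
  have "phi (nc_add h (nc_mul (nc_mul a g) b)) = phi h + phi (nc_mul (nc_mul a g) b)"
       "psi (nc_add h (nc_mul (nc_mul a g) b)) = psi h + psi (nc_mul (nc_mul a g) b)"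
    by (simp_all add: phi_def psi_def nc_add_def algebra_simps)
  then show ?case using phi_gen[OF hw step(2), of a b] step.IH by simp
qed

lemma subst_list:
  assumes "{w. p w \<noteq> 0} \<subseteq> set ws" "distinct ws"
  shows "nc_subst f p u = (\<Sum>w\<leftarrow>ws. p w * nc_prodlist (map f w) u)"
proof -
  have "nc_subst f p u = (\<Sum>w\<in>set ws. p w * nc_prodlist (map f w) u)"
    unfolding nc_subst_def by (rule sum.mono_neutral_left) (use assms in auto)
  also have "\<dots> = (\<Sum>w\<leftarrow>ws. p w * nc_prodlist (map f w) u)"
    using assms(2) by (rule sum.distinct_set_conv_list)
  finally show ?thesis .
qed

lemma pc_supp: "{u. pc A B u \<noteq> 0} \<subseteq> set [[X,Y,Z],[Z,X,Y],[Y,Z,X],[X,Z,Y],[Z,Y,X],[Y,X,Z]]"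
proof
  fix u assume "u \<in> {u. pc A B u \<noteq> 0}"
  then have "u \<in> set (map snd [(A,[X,Y,Z]),(A,[Z,X,Y]),(A,[Y,Z,X]),(B,[X,Z,Y]),(B,[Z,Y,X]),(B,[Y,X,Z])])"
    using nc_lin_notin unfolding pc_def by blast
  then show "u \<in> set [[X,Y,Z],[Z,X,Y],[Y,Z,X],[X,Z,Y],[Z,Y,X],[Y,X,Z]]" by simp
qed

lemma subst_e1: "nc_subst e1_act (pc A B) = pc A B"
proof
  fix u
  show "nc_subst e1_act (pc A B) u = pc A B u"
    apply (subst subst_list[OF pc_supp])
     apply simp
    apply (simp add: nc_prodlist_def e1_act_def nc_var_lin nc_one_lin nc_lin_mul lmul_def)
    apply (cases "u \<in> set [[X,Y,Z],[Z,X,Y],[Y,Z,X],[X,Z,Y],[Z,Y,X],[Y,X,Z]]")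
     apply (simp only: set_simps insert_iff empty_iff)
     apply (elim disjE; simp add: nc_lin_def pc_def)
    apply (simp add: nc_lin_notin pc_def)
    done
qed

lemma subst_e2:
  fixes w :: complex
  assumes hw: "w^3 = 1"
  shows "nc_subst (e2_act w) (pc A B) = pc A B"
proof
  fix u
  have w3: "w * w^2 = 1" "w^2 * w = 1" "w * (w * w) = 1" "w * w * w = 1" using hw
    by (simp_all add: power2_eq_square power3_eq_cube mult.assoc)
  have ww: "w * w = w^2" by (simp add: power2_eq_square)
  show "nc_subst (e2_act w) (pc A B) u = pc A B u"
    apply (subst subst_list[OF pc_supp])
     apply simp
    apply (simp add: nc_prodlist_def e2_act_def nc_var_lin nc_one_lin nc_lin_mul lmul_def nc_lin_scale lscale_def)
    apply (cases "u \<in> set [[X,Y,Z],[Z,X,Y],[Y,Z,X],[X,Z,Y],[Z,Y,X],[Y,X,Z]]")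
     apply (simp only: set_simps insert_iff empty_iff)
     apply (elim disjE; simp add: nc_lin_def pc_def w3 ww)
    apply (simp add: nc_lin_notin pc_def)
    done
qed

lemma pc_homog: "homog 3 (pc A B)"
  unfolding homog_def using pc_supp by fastforce

theorem mainTheorem2:
  fixes \<omega> A B :: complex
  assumes "\<omega> ^ 3 = 1" and "\<omega> \<noteq> 1"
    and "(A, B) \<noteq> (0, 0)"
  shows "\<exists>p. nc_fin p \<and> homog 3 p
      \<and> p \<notin> T_ideal \<omega> A B
      \<and> (\<forall>q. nc_fin q \<longrightarrow> nc_diff (nc_mul p q) (nc_mul q p) \<in> T_ideal \<omega> A B)
      \<and> nc_diff (nc_subst e1_act p) p \<in> T_ideal \<omega> A B
      \<and> nc_diff (nc_subst (e2_act \<omega>) p) p \<in> T_ideal \<omega> A B"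
proof (intro exI conjI allI impI)
  have h1: "1 + \<omega> + \<omega>^2 = 0"
  proof -
    have "(\<omega> - 1) * (1 + \<omega> + \<omega>^2) = \<omega>^3 - 1" by (simp add: algebra_simps power2_eq_square power3_eq_cube)
    then have "(\<omega> - 1) * (1 + \<omega> + \<omega>^2) = 0" using assms(1) by simp
    then show ?thesis using assms(2) by simp
  qed
  show "nc_fin (pc A B)" unfolding pc_def by (rule nc_fin_lin)
  show "homog 3 (pc A B)" by (rule pc_homog)
  show "pc A B \<notin> T_ideal \<omega> A B"
  proof
    assume "pc A B \<in> T_ideal \<omega> A B"
    from phi_ideal[OF h1 this] have "phi (pc A B) = 0" "psi (pc A B) = 0" by auto
    then have "3 * A = 0" "3 * B = 0" by (simp_all add: phi_def psi_def pc_def nc_lin_def)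
    then show False using assms(3) by simp
  qed
  have z: "nc_diff p p \<in> T_ideal \<omega> A B" for p
  proof -
    have "nc_diff p p = nc_zero" by (simp add: nc_diff_def nc_zero_def)
    then show ?thesis by (simp add: T_ideal_def nc_ideal.zero)
  qed
  show "nc_diff (nc_subst e1_act (pc A B)) (pc A B) \<in> T_ideal \<omega> A B"
    using z by (simp add: subst_e1)
  show "nc_diff (nc_subst (e2_act \<omega>) (pc A B)) (pc A B) \<in> T_ideal \<omega> A B"
    using z by (simp add: subst_e2[OF assms(1)])
  fix q :: ncp assume q: "nc_fin q"
  have hv: "comm (pc A B) (nc_var v) \<in> nc_ideal {nc_lin [(1,[X,X])], nc_lin [(1,[Y,Y])], nc_lin [(1,[Z,Z])],
      rel1 \<omega> A B, rel2 \<omega> A B}" for v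
    using comm_X_in[OF assms(1)] comm_Y_in[OF assms(1)] comm_Z_in[OF assms(1)]
    by (cases v) (simp_all add: T_ideal_def)
  show "nc_diff (nc_mul (pc A B) q) (nc_mul q (pc A B)) \<in> T_ideal \<omega> A B"
    using central[OF hv q] by (simp add: comm_def T_ideal_def)
qed

end
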